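(* Let $\mathcal G$ be a finite simplicial graph with a base vertex $v$ and a vertex $w\neq v$. Let $\mathcal L$ be the wedge of four copies of $\mathcal G$ glued along $v$. Let $X_{\mathcal L}$ be the universal cover of the Salvetti complex $S_{\mathcal L}$, and let $\Gamma_{\mathcal L}$ and $BB_{\mathcal L}$ be the right-angled Artin group and Bestvina–Brady group of $\mathcal L$, viewed as discrete subgroups of $G=\mathrm{Aut}(X_{\mathcal L})$ via the deck transformation action. Then $\mathrm{Comm}_G(BB_{\mathcal L})\cap\mathrm{Comm}_G(\Gamma_{\mathcal L})$ is not discrete in $G$. In particular, $\mathrm{Comm}_G(BB_{\mathcal L})$ is not discrete.
   Context: For a finite simplicial graph $\mathcal L$, the right-angled Artin group $\Gamma_{\mathcal L}$ has one generator per vertex and relations that generators of adjacent vertices commute. Its Salvetti complex $S_{\mathcal L}$ is the cube complex with one vertex, one oriented edge-loop per vertex of $\mathcal L$, and a $k$-torus (a $k$-cube with opposite faces identified) for each complete subgraph on $k$ vertices; $\pi_1 S_{\mathcal L}=\Gamma_{\mathcal L}$ and its universal cover $X_{\mathcal L}$ is a CAT(0) cube complex. The Bestvina–Brady group $BB_{\mathcal L}$ is the kernel of the homomorphism $\Gamma_{\mathcal L}\to\mathbb Z$ sending every standard generator to $1$. $\mathrm{Aut}(X_{\mathcal L})$ is the group of cubical automorphisms of $X_{\mathcal L}$ with the compact-open topology. $\mathrm{Comm}_G(A)=\{g\in G: gAg^{-1}\cap A$ has finite index in both $A$ and $gAg^{-1}\}$. *)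

theory Defs
  imports "HOL-Analysis.Analysis"
begin

definition simplicial_graph :: "'a set \<Rightarrow> ('a \<Rightarrow> 'a \<Rightarrow> bool) \<Rightarrow> bool" where
  "simplicial_graph V E \<longleftrightarrow> finite V \<and> (\<forall>x y. E x y \<longrightarrow> x \<in> V \<and> y \<in> V \<and> x \<noteq> y \<and> E y x)"

text \<open>Copy i of vertex x in the wedge; all copies of the base vertex v are identified with (0,v).\<close>
definition wedge_vert :: "'a \<Rightarrow> nat \<Rightarrow> 'a \<Rightarrow> nat \<times> 'a" where
  "wedge_vert v i x = (if x = v then (0, v) else (i, x))"

definition wedge4_V :: "'a set \<Rightarrow> 'a \<Rightarrow> (nat \<times> 'a) set" where
  "wedge4_V V v = {wedge_vert v i x | i x. i < 4 \<and> x \<in> V}"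

definition wedge4_E :: "('a \<Rightarrow> 'a \<Rightarrow> bool) \<Rightarrow> 'a \<Rightarrow> nat \<times> 'a \<Rightarrow> nat \<times> 'a \<Rightarrow> bool" where
  "wedge4_E E v p q \<longleftrightarrow> (\<exists>i x y. i < 4 \<and> E x y \<and> p = wedge_vert v i x \<and> q = wedge_vert v i y)"

text \<open>A letter (s, True) is the generator s, (s, False) its inverse.\<close>
definition raag_words :: "'b set \<Rightarrow> ('b \<times> bool) list set" where
  "raag_words V = {w. \<forall>l \<in> set w. fst l \<in> V}"

inductive raag_eq :: "'b set \<Rightarrow> ('b \<Rightarrow> 'b \<Rightarrow> bool) \<Rightarrow> ('b \<times> bool) list \<Rightarrow> ('b \<times> bool) list \<Rightarrow> bool"
  for V E where
  refl: "w \<in> raag_words V \<Longrightarrow> raag_eq V E w w"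
| sym: "raag_eq V E u w \<Longrightarrow> raag_eq V E w u"
| trans: "raag_eq V E u w \<Longrightarrow> raag_eq V E w z \<Longrightarrow> raag_eq V E u z"
| cancel: "s \<in> V \<Longrightarrow> a \<in> raag_words V \<Longrightarrow> b \<in> raag_words V \<Longrightarrow>
           raag_eq V E (a @ [(s, e), (s, \<not> e)] @ b) (a @ b)"
| commute: "E s t \<Longrightarrow> s \<in> V \<Longrightarrow> t \<in> V \<Longrightarrow> a \<in> raag_words V \<Longrightarrow> b \<in> raag_words V \<Longrightarrow>
           raag_eq V E (a @ [(s, e), (t, f)] @ b) (a @ [(t, f), (s, e)] @ b)"

definition raag_class :: "'b set \<Rightarrow> ('b \<Rightarrow> 'b \<Rightarrow> bool) \<Rightarrow> ('b \<times> bool) list \<Rightarrow> ('b \<times> bool) list set" where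
  "raag_class V E w = {u. raag_eq V E w u}"

text \<open>Vertices of X_L = elements of the RAAG.\<close>
definition X_verts :: "'b set \<Rightarrow> ('b \<Rightarrow> 'b \<Rightarrow> bool) \<Rightarrow> ('b \<times> bool) list set set" where
  "X_verts V E = raag_class V E ` raag_words V"

definition clique :: "'b set \<Rightarrow> ('b \<Rightarrow> 'b \<Rightarrow> bool) \<Rightarrow> 'b set \<Rightarrow> bool" where
  "clique V E \<sigma> \<longleftrightarrow> \<sigma> \<subseteq> V \<and> (\<forall>s\<in>\<sigma>. \<forall>t\<in>\<sigma>. s \<noteq> t \<longrightarrow> E s t)"

text \<open>Vertex set of the cube of X_L based at g = [u] spanned by the clique \<sigma>:
  {g \<cdot> \<Prod>T | T \<subseteq> \<sigma>}.\<close>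
definition X_cube :: "'b set \<Rightarrow> ('b \<Rightarrow> 'b \<Rightarrow> bool) \<Rightarrow> ('b \<times> bool) list \<Rightarrow> 'b set \<Rightarrow> ('b \<times> bool) list set set" where
  "X_cube V E u \<sigma> = {raag_class V E (u @ map (\<lambda>s. (s, True)) ts) | ts. distinct ts \<and> set ts \<subseteq> \<sigma>}"

definition X_cubes :: "'b set \<Rightarrow> ('b \<Rightarrow> 'b \<Rightarrow> bool) \<Rightarrow> ('b \<times> bool) list set set set" where
  "X_cubes V E = {X_cube V E u \<sigma> | u \<sigma>. u \<in> raag_words V \<and> clique V E \<sigma>}"

text \<open>A cubical automorphism is recorded by its (bijective) action on vertices, which must carry
  vertex sets of cubes exactly onto vertex sets of cubes; it is the identity off the vertex set
  (canonical representative).\<close>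
definition cub_aut :: "'b set \<Rightarrow> ('b \<Rightarrow> 'b \<Rightarrow> bool) \<Rightarrow>
    (('b \<times> bool) list set \<Rightarrow> ('b \<times> bool) list set) set" where
  "cub_aut V E = {f. bij_betw f (X_verts V E) (X_verts V E)
      \<and> (\<forall>x. x \<notin> X_verts V E \<longrightarrow> f x = x)
      \<and> (\<forall>C. C \<subseteq> X_verts V E \<longrightarrow> (C \<in> X_cubes V E \<longleftrightarrow> f ` C \<in> X_cubes V E))}"

definition aut_inv :: "'b set \<Rightarrow> ('b \<Rightarrow> 'b \<Rightarrow> bool) \<Rightarrow>
    (('b \<times> bool) list set \<Rightarrow> ('b \<times> bool) list set) \<Rightarrow> ('b \<times> bool) list set \<Rightarrow> ('b \<times> bool) list set" where
  "aut_inv V E f = (\<lambda>x. if x \<in> X_verts V E then inv_into (X_verts V E) f x else x)"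

text \<open>Compact-open topology on Aut(X_L): since X_L is locally finite, it is the topology of
  pointwise convergence on vertices, generated by the sets of automorphisms agreeing with a given
  one on a finite set of vertices.\<close>
definition aut_topology :: "'b set \<Rightarrow> ('b \<Rightarrow> 'b \<Rightarrow> bool) \<Rightarrow>
    (('b \<times> bool) list set \<Rightarrow> ('b \<times> bool) list set) topology" where
  "aut_topology V E = topology_generated_by
     {{f \<in> cub_aut V E. \<forall>x\<in>F. f x = \<phi> x} | F \<phi>. finite F \<and> F \<subseteq> X_verts V E \<and> \<phi> \<in> cub_aut V E}"

definition deck :: "'b set \<Rightarrow> ('b \<Rightarrow> 'b \<Rightarrow> bool) \<Rightarrow> ('b \<times> bool) list \<Rightarrow>
    ('b \<times> bool) list set \<Rightarrow> ('b \<times> bool) list set" where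
  "deck V E u = (\<lambda>x. if x \<in> X_verts V E then raag_class V E (u @ (SOME w. w \<in> x)) else x)"

definition exp_sum :: "('b \<times> bool) list \<Rightarrow> int" where
  "exp_sum w = sum_list (map (\<lambda>l. if snd l then 1 else -1) w)"

definition RAAG_sub where
  "RAAG_sub V E = deck V E ` raag_words V"

definition BB_sub where
  "BB_sub V E = deck V E ` {w \<in> raag_words V. exp_sum w = 0}"

definition finite_index :: "('c \<Rightarrow> 'c) set \<Rightarrow> ('c \<Rightarrow> 'c) set \<Rightarrow> bool" where
  "finite_index K H \<longleftrightarrow> finite {(\<lambda>k. h \<circ> k) ` K | h. h \<in> H}"

definition commensurator where
  "commensurator V E A = {g \<in> cub_aut V E.
     (let B = (\<lambda>a. g \<circ> a \<circ> aut_inv V E g) ` A in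
        finite_index (B \<inter> A) A \<and> finite_index (B \<inter> A) B)}"

definition discrete_in :: "'c topology \<Rightarrow> 'c set \<Rightarrow> bool" where
  "discrete_in T S \<longleftrightarrow> subtopology T S = discrete_topology S"

end

theory Submission
  imports Defs
begin


section \<open>Basic RAAG word facts\<close>

lemma raag_words_append[simp]:
  "(a @ b \<in> raag_words V) \<longleftrightarrow> a \<in> raag_words V \<and> b \<in> raag_words V"
  by (auto simp: raag_words_def)

lemma raag_words_Cons[simp]:
  "(l # b \<in> raag_words V) \<longleftrightarrow> fst l \<in> V \<and> b \<in> raag_words V"
  by (auto simp: raag_words_def)

lemma raag_words_Nil[simp]: "[] \<in> raag_words V"
  by (auto simp: raag_words_def)

lemma raag_eq_words: "raag_eq V E u w \<Longrightarrow> u \<in> raag_words V \<and> w \<in> raag_words V"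
  by (induction rule: raag_eq.induct) (auto simp: raag_words_def)

lemma raag_eq_cong_left:
  "raag_eq V E u w \<Longrightarrow> c \<in> raag_words V \<Longrightarrow> raag_eq V E (c @ u) (c @ w)"
proof (induction rule: raag_eq.induct)
  case (refl w) then show ?case by (auto intro: raag_eq.refl)
next
  case (sym u w) then show ?case by (auto intro: raag_eq.sym)
next
  case (trans u w z) then show ?case by (auto intro: raag_eq.trans)
next
  case (cancel s a b e) then show ?case
    using raag_eq.cancel[of s V "c @ a" b E e] by simp
next
  case (commute s t a b e f) then show ?case
    using raag_eq.commute[of E s t V "c @ a" b e f] by simp
qed

lemma raag_eq_cong_right:
  "raag_eq V E u w \<Longrightarrow> c \<in> raag_words V \<Longrightarrow> raag_eq V E (u @ c) (w @ c)"
proof (induction rule: raag_eq.induct)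
  case (refl w) then show ?case by (auto intro: raag_eq.refl)
next
  case (sym u w) then show ?case by (auto intro: raag_eq.sym)
next
  case (trans u w z) then show ?case by (auto intro: raag_eq.trans)
next
  case (cancel s a b e) then show ?case
    using raag_eq.cancel[of s V a "b @ c" E e] by simp
next
  case (commute s t a b e f) then show ?case
    using raag_eq.commute[of E s t V a "b @ c" e f] by simp
qed

definition winv :: "('b \<times> bool) list \<Rightarrow> ('b \<times> bool) list" where
  "winv w = rev (map (\<lambda>l. (fst l, \<not> snd l)) w)"

lemma winv_simps[simp]: "winv [] = []" "winv (l # w) = winv w @ [(fst l, \<not> snd l)]"
  "winv (a @ b) = winv b @ winv a"
  by (auto simp: winv_def)

lemma winv_words[simp]: "winv w \<in> raag_words V \<longleftrightarrow> w \<in> raag_words V"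
  by (auto simp: winv_def raag_words_def)

lemma inv_cancel:
  assumes "w \<in> raag_words V"
  shows "raag_eq V E (w @ winv w) [] \<and> raag_eq V E (winv w @ w) []"
  using assms
proof (induction w)
  case Nil then show ?case by (auto intro: raag_eq.refl)
next
  case (Cons l w)
  obtain s e where l: "l = (s, e)" by (cases l)
  have sV: "s \<in> V" and wW: "w \<in> raag_words V" using Cons.prems l by auto
  have IH1: "raag_eq V E (w @ winv w) []" and IH2: "raag_eq V E (winv w @ w) []"
    using Cons.IH wW by auto
  have a: "raag_eq V E ([(s,e)] @ (w @ winv w) @ [(s, \<not> e)]) ([(s,e)] @ [] @ [(s, \<not> e)])"
    using raag_eq_cong_left[OF raag_eq_cong_right[OF IH1], of "[(s, \<not> e)]" "[(s,e)]"] sV by simp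
  have b: "raag_eq V E ([] @ [(s,e),(s, \<not> e)] @ []) ([] @ [])"
    using raag_eq.cancel[of s V "[]" "[]" E e] sV by simp
  have 1: "raag_eq V E (l # w @ winv (l # w)) []"
    using raag_eq.trans[OF a] b l by simp
  have c: "raag_eq V E (winv w @ [(s, \<not> e), (s, \<not> \<not> e)] @ w) (winv w @ w)"
    using raag_eq.cancel[of s V "winv w" w E "\<not> e"] sV wW by simp
  have 2: "raag_eq V E (winv (l # w) @ l # w) []"
    using raag_eq.trans[OF c IH2] l by simp
  show ?case using 1 2 by simp
qed

lemma mem_cls: "u \<in> raag_words V \<Longrightarrow> u \<in> raag_class V E u"
  by (simp add: raag_class_def raag_eq.refl)

lemma cls_eq_iff:
  assumes "u \<in> raag_words V" "w \<in> raag_words V"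
  shows "raag_class V E u = raag_class V E w \<longleftrightarrow> raag_eq V E u w"
proof
  assume "raag_class V E u = raag_class V E w"
  then have "w \<in> raag_class V E u" using mem_cls[OF assms(2)] by simp
  then show "raag_eq V E u w" by (simp add: raag_class_def)
next
  assume h: "raag_eq V E u w"
  show "raag_class V E u = raag_class V E w"
    unfolding raag_class_def
    using h by (auto intro: raag_eq.trans raag_eq.sym)
qed

lemma cls_eqI: "raag_eq V E u w \<Longrightarrow> raag_class V E u = raag_class V E w"
  using cls_eq_iff raag_eq_words by metis

lemma X_verts_iff: "x \<in> X_verts V E \<longleftrightarrow> (\<exists>u \<in> raag_words V. x = raag_class V E u)"
  by (auto simp: X_verts_def)

lemma cls_in_X[simp]: "u \<in> raag_words V \<Longrightarrow> raag_class V E u \<in> X_verts V E"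
  by (auto simp: X_verts_def)

lemma some_rep:
  assumes "u \<in> raag_words V"
  shows "raag_eq V E u (SOME w. w \<in> raag_class V E u)"
proof -
  have "\<exists>w. w \<in> raag_class V E u" using mem_cls[OF assms] by blast
  then have "(SOME w. w \<in> raag_class V E u) \<in> raag_class V E u" by (rule someI_ex)
  then show ?thesis by (simp add: raag_class_def)
qed

lemma deck_cls:
  assumes "u \<in> raag_words V" "w \<in> raag_words V"
  shows "deck V E u (raag_class V E w) = raag_class V E (u @ w)"
proof -
  have "raag_eq V E (u @ w) (u @ (SOME w'. w' \<in> raag_class V E w))"
    using raag_eq_cong_left[OF some_rep[OF assms(2)] assms(1)] .
  then show ?thesis using assms unfolding deck_def by (simp add: cls_eqI)
qed

lemma deck_out: "x \<notin> X_verts V E \<Longrightarrow> deck V E u x = x"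
  by (simp add: deck_def)

lemma deck_X: "u \<in> raag_words V \<Longrightarrow> x \<in> X_verts V E \<Longrightarrow> deck V E u x \<in> X_verts V E"
  by (auto simp: X_verts_iff deck_cls)

lemma deck_comp:
  assumes "u \<in> raag_words V" "w \<in> raag_words V"
  shows "deck V E u \<circ> deck V E w = deck V E (u @ w)"
proof
  fix x
  show "(deck V E u \<circ> deck V E w) x = deck V E (u @ w) x"
  proof (cases "x \<in> X_verts V E")
    case True
    then obtain a where a: "a \<in> raag_words V" "x = raag_class V E a" by (auto simp: X_verts_iff)
    then show ?thesis using assms by (simp add: deck_cls)
  next
    case False then show ?thesis by (simp add: deck_out)
  qed
qed

lemma deck_eq:
  assumes "raag_eq V E u u'"
  shows "deck V E u = deck V E u'"
proof
  fix x
  have uw: "u \<in> raag_words V" "u' \<in> raag_words V" using raag_eq_words[OF assms] by auto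
  show "deck V E u x = deck V E u' x"
  proof (cases "x \<in> X_verts V E")
    case True
    then obtain a where a: "a \<in> raag_words V" "x = raag_class V E a" by (auto simp: X_verts_iff)
    then show ?thesis using uw raag_eq_cong_right[OF assms a(1)] by (simp add: deck_cls cls_eqI)
  next
    case False then show ?thesis by (simp add: deck_out)
  qed
qed

lemma deck_Nil: "deck V E [] = id"
proof
  fix x
  show "deck V E [] x = id x"
  proof (cases "x \<in> X_verts V E")
    case True
    then obtain a where a: "a \<in> raag_words V" "x = raag_class V E a" by (auto simp: X_verts_iff)
    then show ?thesis using deck_cls[of "[]" V a E] by simp
  next
    case False then show ?thesis by (simp add: deck_out)
  qed
qed

lemma deck_inv_l: "u \<in> raag_words V \<Longrightarrow> deck V E (winv u) \<circ> deck V E u = id"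
  using deck_comp[of "winv u" V u E] deck_eq[of V E "winv u @ u" "[]"] inv_cancel[of u V E] deck_Nil
  by simp

lemma deck_inv_r: "u \<in> raag_words V \<Longrightarrow> deck V E u \<circ> deck V E (winv u) = id"
  using deck_comp[of u V "winv u" E] deck_eq[of V E "u @ winv u" "[]"] inv_cancel[of u V E] deck_Nil
  by simp

definition ltr :: "('b \<Rightarrow> bool) \<Rightarrow> 'b \<times> bool \<Rightarrow> int" where
  "ltr P l = (if P (fst l) then (if snd l then 1 else -1) else 0)"

definition cnt :: "('b \<Rightarrow> bool) \<Rightarrow> ('b \<times> bool) list \<Rightarrow> int" where
  "cnt P w = sum_list (map (ltr P) w)"

lemma cnt_simps[simp]: "cnt P [] = 0" "cnt P (l # w) = ltr P l + cnt P w"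
  "cnt P (a @ b) = cnt P a + cnt P b"
  by (auto simp: cnt_def)

lemma cnt_winv[simp]: "cnt P (winv w) = - cnt P w"
  by (induction w) (auto simp: ltr_def)

lemma cnt_raag_eq: "raag_eq V E u w \<Longrightarrow> cnt P u = cnt P w"
  by (induction rule: raag_eq.induct) (auto simp: ltr_def)

lemma exp_sum_cnt: "exp_sum w = cnt (\<lambda>_. True) w"
  unfolding exp_sum_def cnt_def ltr_def by simp

lemma ltr_bound: "\<bar>ltr P l\<bar> \<le> 1"
  by (auto simp: ltr_def)



definition tw :: "('b \<Rightarrow> 'b) \<Rightarrow> int \<Rightarrow> int \<Rightarrow> int \<Rightarrow> 'b \<Rightarrow> 'b" where
  "tw \<tau> N q0 q s = (if q mod N = q0 then \<tau> s else s)"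

fun gm :: "('b \<Rightarrow> 'b) \<Rightarrow> ('b \<Rightarrow> bool) \<Rightarrow> int \<Rightarrow> int \<Rightarrow> int \<Rightarrow> ('b \<times> bool) list \<Rightarrow> ('b \<times> bool) list" where
  "gm \<tau> P N q0 q [] = []"
| "gm \<tau> P N q0 q (l # w) = (tw \<tau> N q0 q (fst l), snd l) # gm \<tau> P N q0 (q + ltr P l) w"

definition fm where
  "fm V E \<tau> P N q0 x = (if x \<in> X_verts V E then raag_class V E (gm \<tau> P N q0 0 (SOME w. w \<in> x)) else x)"

locale twist =
  fixes V :: "'b set" and E :: "'b \<Rightarrow> 'b \<Rightarrow> bool" and tau :: "'b \<Rightarrow> 'b"
    and P :: "'b \<Rightarrow> bool" and N q0 :: int
  assumes tauV: "s \<in> V \<Longrightarrow> tau s \<in> V"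
    and tau_inv: "tau (tau s) = s"
    and P_tau: "P (tau s) = P s"
    and C1: "P s \<Longrightarrow> tau s = s"
    and C2: "E s t \<Longrightarrow> P s \<Longrightarrow> tau t = t"
    and C2': "E s t \<Longrightarrow> P t \<Longrightarrow> tau s = s"
    and C3: "E s t \<Longrightarrow> E (tau s) (tau t)"
begin

abbreviation "g \<equiv> gm tau P N q0"
abbreviation "f \<equiv> fm V E tau P N q0"
abbreviation "cls \<equiv> raag_class V E"

lemma tw_inv[simp]: "tw tau N q0 q (tw tau N q0 q s) = s"
  by (auto simp: tw_def tau_inv)

lemma tw_V: "s \<in> V \<Longrightarrow> tw tau N q0 q s \<in> V"
  by (auto simp: tw_def tauV)

lemma tw_E: "E s t \<Longrightarrow> E (tw tau N q0 q s) (tw tau N q0 q t)"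
  by (auto simp: tw_def C3)

lemma ltr_tw[simp]: "ltr P (tw tau N q0 q s, e) = ltr P (s, e)"
  by (auto simp: ltr_def tw_def P_tau)

lemma tw_shift: "(P s \<Longrightarrow> tau t = t) \<Longrightarrow> tw tau N q0 (q + ltr P (s, e)) t = tw tau N q0 q t"
  by (cases "P s") (auto simp: tw_def ltr_def)

lemma gm_append: "g q (a @ b) = g q a @ g (q + cnt P a) b"
  by (induction a arbitrary: q) (auto simp: add.assoc)

lemma cnt_gm:
  assumes "\<And>s. Q (tau s) = Q s"
  shows "cnt Q (g q w) = cnt Q w"
  using assms by (induction w arbitrary: q) (auto simp: ltr_def tw_def)

lemma cnt_gm_P[simp]: "cnt P (g q w) = cnt P w"
  using cnt_gm[of P] P_tau by blast

lemma exp_sum_gm[simp]: "exp_sum (g q w) = exp_sum w"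
  using cnt_gm[of "\<lambda>_. True"] by (simp add: exp_sum_cnt)

lemma gm_words: "w \<in> raag_words V \<Longrightarrow> g q w \<in> raag_words V"
  by (induction w arbitrary: q) (auto simp: tw_V)

lemma gm_invol[simp]: "g q (g q w) = w"
  by (induction w arbitrary: q) auto

lemma gm_mod: "q mod N = q' mod N \<Longrightarrow> g q w = g q' w"
proof (induction w arbitrary: q q')
  case Nil then show ?case by simp
next
  case (Cons l w)
  have "(q + ltr P l) mod N = (q' + ltr P l) mod N"
    by (rule mod_add_cong[OF Cons.prems HOL.refl])
  then have "g (q + ltr P l) w = g (q' + ltr P l) w" by (rule Cons.IH)
  then show ?case using Cons.prems by (simp add: tw_def)
qed

lemma gm_raag_eq: "raag_eq V E u w \<Longrightarrow> raag_eq V E (g q u) (g q w)"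
proof (induction rule: raag_eq.induct)
  case (refl w) then show ?case by (simp add: gm_words raag_eq.refl)
next
  case (sym u w) show ?case using sym.IH by (rule raag_eq.sym)
next
  case (trans u w z) show ?case using trans.IH by (rule raag_eq.trans)
next
  case (cancel s a b e)
  define q1 where "q1 = q + cnt P a"
  have sh: "tw tau N q0 (q1 + ltr P (s, e)) s = tw tau N q0 q1 s"
    by (rule tw_shift) (rule C1)
  have z: "ltr P (s, e) + ltr P (s, \<not> e) = 0" by (auto simp: ltr_def)
  have L: "g q (a @ [(s, e), (s, \<not> e)] @ b)
     = g q a @ [(tw tau N q0 q1 s, e), (tw tau N q0 q1 s, \<not> e)] @ g q1 b"
    using sh z by (simp add: gm_append q1_def add.assoc)
  have R: "g q (a @ b) = g q a @ g q1 b" by (simp add: gm_append q1_def)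
  have h2: "tw tau N q0 q1 s \<in> V" by (rule tw_V[OF cancel(1)])
  have h4: "g q a \<in> raag_words V" by (rule gm_words[OF cancel(2)])
  have h5: "g q1 b \<in> raag_words V" by (rule gm_words[OF cancel(3)])
  show ?case unfolding L R using raag_eq.cancel[where E=E and V=V, OF h2 h4 h5] by simp
next
  case (commute s t a b e f)
  define q1 where "q1 = q + cnt P a"
  have sh1: "tw tau N q0 (q1 + ltr P (s, e)) t = tw tau N q0 q1 t"
    by (rule tw_shift) (rule C2[OF commute(1)])
  have sh2: "tw tau N q0 (q1 + ltr P (t, f)) s = tw tau N q0 q1 s"
    by (rule tw_shift) (rule C2'[OF commute(1)])
  define r where "r = q1 + ltr P (s, e) + ltr P (t, f)"
  have L0: "g q (a @ [(s, e), (t, f)] @ b)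
     = g q a @ [(tw tau N q0 q1 s, e), (tw tau N q0 (q1 + ltr P (s, e)) t, f)] @ g r b"
    by (simp add: gm_append q1_def r_def add.assoc)
  have R0: "g q (a @ [(t, f), (s, e)] @ b)
     = g q a @ [(tw tau N q0 q1 t, f), (tw tau N q0 (q1 + ltr P (t, f)) s, e)] @ g (q1 + ltr P (t, f) + ltr P (s, e)) b"
    by (simp add: gm_append q1_def add.assoc)
  have rr: "q1 + ltr P (t, f) + ltr P (s, e) = r" by (simp add: r_def)
  have L: "g q (a @ [(s, e), (t, f)] @ b)
     = g q a @ [(tw tau N q0 q1 s, e), (tw tau N q0 q1 t, f)] @ g r b"
    using L0 sh1 by simp
  have R: "g q (a @ [(t, f), (s, e)] @ b)
     = g q a @ [(tw tau N q0 q1 t, f), (tw tau N q0 q1 s, e)] @ g r b"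
    using R0 sh2 rr by simp
  have h1: "E (tw tau N q0 q1 s) (tw tau N q0 q1 t)" by (rule tw_E[OF commute(1)])
  have h2: "tw tau N q0 q1 s \<in> V" by (rule tw_V[OF commute(2)])
  have h3: "tw tau N q0 q1 t \<in> V" by (rule tw_V[OF commute(3)])
  have h4: "g q a \<in> raag_words V" by (rule gm_words[OF commute(4)])
  have h5: "g r b \<in> raag_words V" by (rule gm_words[OF commute(5)])
  show ?case unfolding L R by (rule raag_eq.commute[where E=E and V=V, OF h1 h2 h3 h4 h5])
qed

lemma fm_cls: "u \<in> raag_words V \<Longrightarrow> f (cls u) = cls (g 0 u)"
proof -
  assume u: "u \<in> raag_words V"
  have "raag_eq V E (g 0 u) (g 0 (SOME w. w \<in> cls u))" by (rule gm_raag_eq[OF some_rep[OF u]])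
  then have "cls (g 0 (SOME w. w \<in> cls u)) = cls (g 0 u)" using cls_eqI by metis
  then show ?thesis using u unfolding fm_def by simp
qed

lemma fm_out: "x \<notin> X_verts V E \<Longrightarrow> f x = x"
  by (simp add: fm_def)

lemma fm_X: "x \<in> X_verts V E \<Longrightarrow> f x \<in> X_verts V E"
proof -
  assume "x \<in> X_verts V E"
  then obtain a where a: "a \<in> raag_words V" "x = cls a" by (auto simp: X_verts_iff)
  then have "f x = cls (g 0 a)" by (simp add: fm_cls)
  then show ?thesis using gm_words[OF a(1)] cls_in_X by metis
qed

lemma fm_fm: "f (f x) = x"
proof (cases "x \<in> X_verts V E")
  case True
  then obtain a where a: "a \<in> raag_words V" "x = cls a" by (auto simp: X_verts_iff)
  then show ?thesis by (simp add: fm_cls gm_words)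
next
  case False then show ?thesis by (simp add: fm_out)
qed

lemma fm_comp: "f \<circ> f = id"
  by (rule ext) (simp add: fm_fm)

lemma fm_bij: "bij_betw f (X_verts V E) (X_verts V E)"
  by (rule bij_betw_byWitness[where f' = f]) (simp_all add: fm_fm fm_X image_subset_iff)

lemma aut_inv_fm: "aut_inv V E f = f"
proof
  fix x
  show "aut_inv V E f x = f x"
  proof (cases "x \<in> X_verts V E")
    case True
    have inj: "inj_on f (X_verts V E)" using fm_bij bij_betw_def by blast
    have "inv_into (X_verts V E) f (f (f x)) = f x"
      by (rule inv_into_f_f[OF inj fm_X[OF True]])
    then show ?thesis using True by (simp add: aut_inv_def fm_fm)
  next
    case False then show ?thesis by (simp add: aut_inv_def fm_out)
  qed
qed

lemma gm_fix: "(\<forall>l\<in>set w. tau (fst l) = fst l) \<Longrightarrow> g q w = w"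
  by (induction w arbitrary: q) (simp_all add: tw_def)

lemma gm_noP: "(\<forall>l\<in>set w. \<not> P (fst l)) \<Longrightarrow> g q w = map (\<lambda>l. (tw tau N q0 q (fst l), snd l)) w"
  by (induction w arbitrary: q) (simp_all add: ltr_def)

lemma cube_rho:
  assumes "clique V E \<sigma>"
  shows "\<exists>\<rho>. (\<forall>s. \<rho> (\<rho> s) = s) \<and> (\<forall>s\<in>V. \<rho> s \<in> V) \<and> (\<forall>s t. E s t \<longrightarrow> E (\<rho> s) (\<rho> t))
     \<and> (\<forall>ts. set ts \<subseteq> \<sigma> \<longrightarrow> g q (map (\<lambda>s. (s, True)) ts) = map (\<lambda>s. (s, True)) (map \<rho> ts))"
proof (cases "\<exists>s0\<in>\<sigma>. P s0")
  case True
  then obtain s0 where s0: "s0 \<in> \<sigma>" "P s0" by blast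
  have fx: "tau t = t" if "t \<in> \<sigma>" for t
  proof (cases "t = s0")
    case True then show ?thesis using C1 s0 by simp
  next
    case False
    have cl: "\<forall>a\<in>\<sigma>. \<forall>b\<in>\<sigma>. a \<noteq> b \<longrightarrow> E a b" using assms by (simp add: clique_def)
    have "s0 \<noteq> t" using False by simp
    then have "E s0 t" using cl s0(1) that by blast
    then show ?thesis using C2 s0 by blast
  qed
  show ?thesis
  proof (rule exI[of _ id], intro conjI allI ballI impI)
    fix ts :: "'b list" assume "set ts \<subseteq> \<sigma>"
    then have "\<forall>l\<in>set (map (\<lambda>s. (s, True)) ts). tau (fst l) = fst l" using fx by auto
    then show "g q (map (\<lambda>s. (s, True)) ts) = map (\<lambda>s. (s, True)) (map id ts)"
      by (simp add: gm_fix)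
  qed simp_all
next
  case False
  show ?thesis
  proof (rule exI[of _ "tw tau N q0 q"], intro conjI allI ballI impI)
    fix ts :: "'b list" assume "set ts \<subseteq> \<sigma>"
    then have "\<forall>l\<in>set (map (\<lambda>s. (s, True)) ts). \<not> P (fst l)" using False by auto
    then show "g q (map (\<lambda>s. (s, True)) ts) = map (\<lambda>s. (s, True)) (map (tw tau N q0 q) ts)"
      by (simp add: gm_noP)
  qed (simp_all add: tw_V tw_E)
qed

lemma clique_image:
  assumes "clique V E \<sigma>" "\<forall>s. \<rho> (\<rho> s) = s" "\<forall>s\<in>V. \<rho> s \<in> V" "\<forall>s t. E s t \<longrightarrow> E (\<rho> s) (\<rho> t)"
  shows "clique V E (\<rho> ` \<sigma>)"
  unfolding clique_def
proof (intro conjI ballI impI)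
  show "\<rho> ` \<sigma> \<subseteq> V" using assms(1,3) unfolding clique_def by blast
next
  fix a b assume ab: "a \<in> \<rho> ` \<sigma>" "b \<in> \<rho> ` \<sigma>" "a \<noteq> b"
  then obtain s t where st: "s \<in> \<sigma>" "t \<in> \<sigma>" "a = \<rho> s" "b = \<rho> t" by blast
  then have "s \<noteq> t" using ab by blast
  then have "E s t" using st assms(1) unfolding clique_def by blast
  then have "E (\<rho> s) (\<rho> t)" using assms(4) by blast
  then show "E a b" using st by simp
qed

lemma fm_cube:
  assumes u: "u \<in> raag_words V" and cl: "clique V E \<sigma>"
  shows "f ` X_cube V E u \<sigma> \<in> X_cubes V E"
proof -
  obtain \<rho> where r1: "\<forall>s. \<rho> (\<rho> s) = s" and r2: "\<forall>s\<in>V. \<rho> s \<in> V"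
    and r3: "\<forall>s t. E s t \<longrightarrow> E (\<rho> s) (\<rho> t)"
    and r4: "\<forall>ts. set ts \<subseteq> \<sigma> \<longrightarrow> g (cnt P u) (map (\<lambda>s. (s, True)) ts) = map (\<lambda>s. (s, True)) (map \<rho> ts)"
    using cube_rho[OF cl, of "cnt P u"] by blast
  have sV: "\<sigma> \<subseteq> V" using cl by (simp add: clique_def)
  have inj: "inj \<rho>" by (metis r1 injI)
  have img: "f ` X_cube V E u \<sigma> = X_cube V E (g 0 u) (\<rho> ` \<sigma>)"
  proof
    show "f ` X_cube V E u \<sigma> \<subseteq> X_cube V E (g 0 u) (\<rho> ` \<sigma>)"
    proof
      fix y assume "y \<in> f ` X_cube V E u \<sigma>"
      then obtain ts where ts: "distinct ts" "set ts \<subseteq> \<sigma>"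
        and y: "y = f (cls (u @ map (\<lambda>s. (s, True)) ts))"
        by (auto simp: X_cube_def)
      have w: "u @ map (\<lambda>s. (s, True)) ts \<in> raag_words V"
        using u ts sV by (auto simp: raag_words_def)
      have e: "g (cnt P u) (map (\<lambda>s. (s, True)) ts) = map (\<lambda>s. (s, True)) (map \<rho> ts)"
        using r4 ts(2) by blast
      have "y = cls (g 0 u @ map (\<lambda>s. (s, True)) (map \<rho> ts))"
        using y fm_cls[OF w] e by (simp only: gm_append add_0_left)
      moreover have "distinct (map \<rho> ts)" using ts(1) inj_on_subset[OF inj subset_UNIV]
        by (simp add: distinct_map)
      moreover have "set (map \<rho> ts) \<subseteq> \<rho> ` \<sigma>" using ts by auto
      ultimately show "y \<in> X_cube V E (g 0 u) (\<rho> ` \<sigma>)"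
        unfolding X_cube_def by blast
    qed
  next
    show "X_cube V E (g 0 u) (\<rho> ` \<sigma>) \<subseteq> f ` X_cube V E u \<sigma>"
    proof
      fix y assume "y \<in> X_cube V E (g 0 u) (\<rho> ` \<sigma>)"
      then obtain ts' where ts': "distinct ts'" "set ts' \<subseteq> \<rho> ` \<sigma>"
        and y: "y = cls (g 0 u @ map (\<lambda>s. (s, True)) ts')"
        by (auto simp: X_cube_def)
      define ts where "ts = map \<rho> ts'"
      have ts'eq: "map \<rho> ts = ts'" using r1 by (simp add: ts_def comp_def)
      have tsS: "set ts \<subseteq> \<sigma>" using ts' r1 by (auto simp: ts_def)
      have tsd: "distinct ts" using ts'(1) inj_on_subset[OF inj subset_UNIV]
        by (simp add: ts_def distinct_map)
      have w: "u @ map (\<lambda>s. (s, True)) ts \<in> raag_words V"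
        using u tsS sV by (auto simp: raag_words_def)
      have e: "g (cnt P u) (map (\<lambda>s. (s, True)) ts) = map (\<lambda>s. (s, True)) ts'"
        using r4 tsS ts'eq by metis
      have "y = f (cls (u @ map (\<lambda>s. (s, True)) ts))"
        using y fm_cls[OF w] e by (simp only: gm_append add_0_left)
      moreover have "cls (u @ map (\<lambda>s. (s, True)) ts) \<in> X_cube V E u \<sigma>"
        using tsS tsd unfolding X_cube_def by blast
      ultimately show "y \<in> f ` X_cube V E u \<sigma>" by blast
    qed
  qed
  have a1: "g 0 u \<in> raag_words V" by (rule gm_words[OF u])
  have a2: "clique V E (\<rho> ` \<sigma>)" by (rule clique_image[OF cl r1 r2 r3])
  show ?thesis unfolding img X_cubes_def mem_Collect_eq
    apply (rule exI[of _ "g 0 u"], rule exI[of _ "\<rho> ` \<sigma>"])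
    using a1 a2 by simp
qed

lemma fm_cub_aut: "f \<in> cub_aut V E"
proof -
  have A: "f ` C \<in> X_cubes V E" if hC: "C \<in> X_cubes V E" for C
  proof -
    obtain u \<sigma> where "C = X_cube V E u \<sigma>" "u \<in> raag_words V" "clique V E \<sigma>"
      using hC unfolding X_cubes_def by blast
    then show ?thesis using fm_cube by simp
  qed
  have B: "C \<in> X_cubes V E" if "f ` C \<in> X_cubes V E" for C
  proof -
    have "f ` (f ` C) = C" by (simp add: image_image fm_fm)
    then show ?thesis using A[OF that] by simp
  qed
  show ?thesis unfolding cub_aut_def mem_Collect_eq
  proof (intro conjI allI impI)
    show "bij_betw f (X_verts V E) (X_verts V E)" by (rule fm_bij)
  next
    fix x :: "('b \<times> bool) list set" assume "x \<notin> X_verts V E"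
    then show "f x = x" by (rule fm_out)
  next
    fix C :: "('b \<times> bool) list set set" assume "C \<subseteq> X_verts V E"
    show "C \<in> X_cubes V E \<longleftrightarrow> f ` C \<in> X_cubes V E" using A B by blast
  qed
qed

lemma fm_conj:
  assumes l: "l \<in> raag_words V" and m: "cnt P l mod N = 0"
  shows "f \<circ> deck V E l \<circ> f = deck V E (g 0 l)"
proof
  fix x
  show "(f \<circ> deck V E l \<circ> f) x = deck V E (g 0 l) x"
  proof (cases "x \<in> X_verts V E")
    case True
    then obtain a where a: "a \<in> raag_words V" "x = cls a" by (auto simp: X_verts_iff)
    have "g (cnt P l) (g 0 a) = g 0 (g 0 a)" by (rule gm_mod) (simp add: m)
    then show ?thesis using a l
      by (simp add: fm_cls deck_cls gm_words gm_append)
  next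
    case False
    then show ?thesis by (simp add: fm_out deck_out)
  qed
qed

end


lemma fi_crit:
  assumes K: "\<forall>l\<in>\<Lambda>. (\<lambda>k. l \<circ> k) ` K = K" and I: "finite I" and rI: "\<forall>w\<in>W. \<rho> w \<in> I"
    and rep: "\<forall>w\<in>W. \<forall>w'\<in>W. \<rho> w = \<rho> w' \<longrightarrow> (\<exists>l\<in>\<Lambda>. h w' = h w \<circ> l)"
  shows "finite_index K (h ` W)"
proof -
  define r where "r i = (SOME w. w \<in> W \<and> \<rho> w = i)" for i
  have sub: "{(\<lambda>k. h' \<circ> k) ` K | h'. h' \<in> h ` W} \<subseteq> (\<lambda>i. (\<lambda>k. h (r i) \<circ> k) ` K) ` I"
  proof
    fix c assume "c \<in> {(\<lambda>k. h' \<circ> k) ` K | h'. h' \<in> h ` W}"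
    then obtain w where w: "w \<in> W" "c = (\<lambda>k. h w \<circ> k) ` K" by blast
    have ex: "\<exists>w0. w0 \<in> W \<and> \<rho> w0 = \<rho> w" using w by blast
    have r: "r (\<rho> w) \<in> W \<and> \<rho> (r (\<rho> w)) = \<rho> w"
      unfolding r_def by (rule someI_ex[OF ex])
    then obtain l where l: "l \<in> \<Lambda>" "h w = h (r (\<rho> w)) \<circ> l" using rep w by metis
    have "c = (\<lambda>k. h (r (\<rho> w)) \<circ> k) ` ((\<lambda>k. l \<circ> k) ` K)"
      using w(2) l(2) by (simp add: image_image comp_assoc)
    also have "\<dots> = (\<lambda>k. h (r (\<rho> w)) \<circ> k) ` K" using K l(1) by simp
    finally show "c \<in> (\<lambda>i. (\<lambda>k. h (r i) \<circ> k) ` K) ` I" using rI w(1) by blast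
  qed
  show ?thesis unfolding finite_index_def
    by (rule finite_subset[OF sub finite_imageI[OF I]])
qed

lemma comp_image_Int:
  assumes "l' \<circ> l = id" "(\<lambda>k. l \<circ> k) ` A = A" "(\<lambda>k. l \<circ> k) ` B = B"
  shows "(\<lambda>k. l \<circ> k) ` (B \<inter> A) = B \<inter> A"
proof -
  have inj: "inj (\<lambda>k. l \<circ> k)"
  proof (rule injI)
    fix x y assume "l \<circ> x = l \<circ> y"
    then have "l' \<circ> (l \<circ> x) = l' \<circ> (l \<circ> y)" by simp
    then show "x = y" using assms(1) by (simp add: comp_assoc[symmetric])
  qed
  have "(\<lambda>k. l \<circ> k) ` (B \<inter> A) = (\<lambda>k. l \<circ> k) ` B \<inter> (\<lambda>k. l \<circ> k) ` A"
    by (rule image_Int[OF inj])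
  then show ?thesis using assms(2,3) by simp
qed

context twist
begin

lemma deck_image_W:
  assumes W: "W \<subseteq> raag_words V" "\<forall>a\<in>W. \<forall>b\<in>W. a @ b \<in> W" "\<forall>a\<in>W. winv a \<in> W"
    and m: "m \<in> W"
  shows "(\<lambda>k. deck V E m \<circ> k) ` (deck V E ` W) = deck V E ` W"
proof
  show "(\<lambda>k. deck V E m \<circ> k) ` deck V E ` W \<subseteq> deck V E ` W"
  proof
    fix y assume "y \<in> (\<lambda>k. deck V E m \<circ> k) ` deck V E ` W"
    then obtain a where a: "a \<in> W" "y = deck V E m \<circ> deck V E a" by blast
    then have "y = deck V E (m @ a)" using W(1) m by (simp add: deck_comp subset_iff)
    then show "y \<in> deck V E ` W" using W(2) a(1) m by blast
  qed
next
  show "deck V E ` W \<subseteq> (\<lambda>k. deck V E m \<circ> k) ` deck V E ` W"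
  proof
    fix y assume "y \<in> deck V E ` W"
    then obtain a where a: "a \<in> W" "y = deck V E a" by blast
    have mw: "m \<in> raag_words V" "a \<in> raag_words V" using W(1) m a(1) by auto
    have iw: "winv m @ a \<in> W" using W(2,3) m a(1) by blast
    have "raag_eq V E ((m @ winv m) @ a) ([] @ a)"
      by (rule raag_eq_cong_right[OF conjunct1[OF inv_cancel[OF mw(1)]] mw(2)])
    then have "deck V E (m @ winv m @ a) = deck V E a" using deck_eq by fastforce
    then have "y = deck V E m \<circ> deck V E (winv m @ a)"
      using a(2) mw by (simp add: deck_comp)
    then show "y \<in> (\<lambda>k. deck V E m \<circ> k) ` deck V E ` W" using iw by blast
  qed
qed

lemma fm_comm:
  assumes Npos: "N > 0"
    and W: "W \<subseteq> raag_words V" "\<forall>a\<in>W. \<forall>b\<in>W. a @ b \<in> W" "\<forall>a\<in>W. winv a \<in> W"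
      "\<forall>a\<in>W. g 0 a \<in> W"
  shows "f \<in> commensurator V E (deck V E ` W)"
proof -
  let ?D = "deck V E"
  let ?A = "?D ` W"
  let ?B = "(\<lambda>a. f \<circ> a \<circ> aut_inv V E f) ` ?A"
  define LW where "LW = {l \<in> W. cnt P l mod N = 0}"
  let ?\<Lambda> = "?D ` LW"
  have ff: "f \<circ> f = id" by (rule fm_comp)
  have B: "?B = (\<lambda>a. f \<circ> a \<circ> f) ` ?A" by (simp add: aut_inv_fm)
  have Bw: "?B = (\<lambda>w. f \<circ> ?D w \<circ> f) ` W" unfolding B by (simp add: image_image)
  have Dl: "?D l = f \<circ> ?D (g 0 l) \<circ> f" if "l \<in> LW" for l
  proof -
    have "g 0 l \<in> raag_words V" "cnt P (g 0 l) mod N = 0"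
      using that W(1) gm_words unfolding LW_def by auto
    then show ?thesis using fm_conj by simp
  qed
  have gLW: "g 0 l \<in> LW" if "l \<in> LW" for l using that W(4) unfolding LW_def by simp
  have Bimg: "(\<lambda>k. (f \<circ> ?D m \<circ> f) \<circ> k) ` ((\<lambda>a. f \<circ> a \<circ> f) ` ?A) = (\<lambda>a. f \<circ> a \<circ> f) ` ?A"
    if "m \<in> W" for m
  proof -
    have "(\<lambda>k. (f \<circ> ?D m \<circ> f) \<circ> k) ` ((\<lambda>a. f \<circ> a \<circ> f) ` ?A)
        = (\<lambda>a. f \<circ> a \<circ> f) ` ((\<lambda>k. ?D m \<circ> k) ` ?A)"
    proof -
      have "(f \<circ> ?D m \<circ> f) \<circ> (f \<circ> a \<circ> f) = f \<circ> (?D m \<circ> a) \<circ> f" for a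
        by (simp add: fun_eq_iff fm_fm)
      then show ?thesis by (simp add: image_image)
    qed
    then show ?thesis using deck_image_W[OF W(1,2,3) that] by simp
  qed
  have Lam_A: "(\<lambda>k. l \<circ> k) ` ?A = ?A" if hl: "l \<in> ?\<Lambda>" for l
  proof -
    obtain m where m: "m \<in> LW" "l = ?D m" using hl by blast
    have "m \<in> W" using m(1) unfolding LW_def by simp
    then show ?thesis using deck_image_W[OF W(1,2,3)] m(2) by simp
  qed
  have Lam_B: "(\<lambda>k. l \<circ> k) ` ?B = ?B" if hl: "l \<in> ?\<Lambda>" for l
  proof -
    obtain m where m: "m \<in> LW" "l = ?D m" using hl by blast
    have "l = f \<circ> ?D (g 0 m) \<circ> f" using Dl[OF m(1)] m(2) by simp
    moreover have "g 0 m \<in> W" using gLW[OF m(1)] unfolding LW_def by simp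
    ultimately show ?thesis unfolding B using Bimg by simp
  qed
  have linv: "\<exists>l'. l' \<circ> l = id" if hl: "l \<in> ?\<Lambda>" for l
  proof -
    obtain m where m: "m \<in> LW" "l = ?D m" using hl by blast
    have "m \<in> raag_words V" using m(1) W(1) unfolding LW_def by auto
    then show ?thesis using deck_inv_l m(2) by blast
  qed
  have K: "\<forall>l\<in>?\<Lambda>. (\<lambda>k. l \<circ> k) ` (?B \<inter> ?A) = ?B \<inter> ?A"
  proof
    fix l assume hl: "l \<in> ?\<Lambda>"
    obtain l' where l': "l' \<circ> l = id" using linv[OF hl] by blast
    show "(\<lambda>k. l \<circ> k) ` (?B \<inter> ?A) = ?B \<inter> ?A"
      by (rule comp_image_Int[OF l' Lam_A[OF hl] Lam_B[OF hl]])
  qed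
  have fin: "finite {0..<N}" by simp
  have rI: "\<forall>w\<in>W. cnt P w mod N \<in> {0..<N}" using Npos by simp
  have diff: "winv w @ w' \<in> LW" if "w \<in> W" "w' \<in> W" "cnt P w mod N = cnt P w' mod N" for w w'
  proof -
    have "(cnt P w' - cnt P w) mod N = (cnt P w' mod N - cnt P w mod N) mod N"
      by (simp add: mod_diff_eq)
    then have "(cnt P w' - cnt P w) mod N = 0" using that(3) by simp
    then show ?thesis using that W(2,3) unfolding LW_def by (simp add: algebra_simps)
  qed
  have repA: "?D w' = ?D w \<circ> ?D (winv w @ w')" if "w \<in> W" "w' \<in> W" for w w'
  proof -
    have mw: "w \<in> raag_words V" "w' \<in> raag_words V" using W(1) that by auto
    have "raag_eq V E ((w @ winv w) @ w') ([] @ w')"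
      by (rule raag_eq_cong_right[OF conjunct1[OF inv_cancel[OF mw(1)]] mw(2)])
    then have "deck V E (w @ winv w @ w') = deck V E w'" using deck_eq by fastforce
    then show ?thesis using mw by (simp add: deck_comp)
  qed
  have fiA: "finite_index (?B \<inter> ?A) ?A"
  proof (rule fi_crit[OF K fin rI])
    show "\<forall>w\<in>W. \<forall>w'\<in>W. cnt P w mod N = cnt P w' mod N \<longrightarrow> (\<exists>l\<in>?\<Lambda>. ?D w' = ?D w \<circ> l)"
      using repA diff by blast
  qed
  have fiB: "finite_index (?B \<inter> ?A) ((\<lambda>w. f \<circ> ?D w \<circ> f) ` W)"
  proof (rule fi_crit[OF K fin rI])
    show "\<forall>w\<in>W. \<forall>w'\<in>W. cnt P w mod N = cnt P w' mod N \<longrightarrow>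
       (\<exists>l\<in>?\<Lambda>. f \<circ> ?D w' \<circ> f = (f \<circ> ?D w \<circ> f) \<circ> l)"
    proof (intro ballI impI)
      fix w w' assume ww: "w \<in> W" "w' \<in> W" "cnt P w mod N = cnt P w' mod N"
      define m where "m = winv w @ w'"
      have mL: "m \<in> LW" using diff ww m_def by blast
      have "f \<circ> ?D w' \<circ> f = f \<circ> ?D w \<circ> ?D m \<circ> f" using repA[OF ww(1,2)] m_def by (simp add: comp_assoc)
      also have "\<dots> = (f \<circ> ?D w \<circ> f) \<circ> (f \<circ> ?D m \<circ> f)"
        by (simp add: fun_eq_iff fm_fm)
      also have "\<dots> = (f \<circ> ?D w \<circ> f) \<circ> ?D (g 0 m)"
        using Dl[OF gLW[OF mL]] by simp
      finally show "\<exists>l\<in>?\<Lambda>. f \<circ> ?D w' \<circ> f = (f \<circ> ?D w \<circ> f) \<circ> l"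
        using gLW[OF mL] by blast
    qed
  qed
  show ?thesis unfolding commensurator_def Let_def
    using fm_cub_aut fiA fiB Bw by simp
qed

lemma gm_id_cond:
  "(\<forall>k. \<bar>k\<bar> \<le> int (length u) \<longrightarrow> (q + k) mod N \<noteq> q0) \<Longrightarrow> g q u = u"
proof (induction u arbitrary: q)
  case Nil then show ?case by simp
next
  case (Cons l u)
  have q: "q mod N \<noteq> q0" using Cons.prems[rule_format, of 0] by simp
  have "\<forall>k. \<bar>k\<bar> \<le> int (length u) \<longrightarrow> (q + ltr P l + k) mod N \<noteq> q0"
  proof (intro allI impI)
    fix k assume k: "\<bar>k\<bar> \<le> int (length u)"
    have "\<bar>ltr P l + k\<bar> \<le> int (length (l # u))" using ltr_bound[of P l] k by simp
    then show "(q + ltr P l + k) mod N \<noteq> q0" using Cons.prems by (simp add: add.assoc)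
  qed
  then have "g (q + ltr P l) u = u" by (rule Cons.IH)
  then show ?case using q by (simp add: tw_def)
qed

end



section \<open>Topology\<close>

lemma open_id:
  assumes "generate_topology_on
     {{f \<in> cub_aut V E. \<forall>x\<in>F. f x = \<phi> x} | F \<phi>. finite F \<and> F \<subseteq> X_verts V E \<and> \<phi> \<in> cub_aut V E} U"
    and "id \<in> U"
  shows "\<exists>F. finite F \<and> F \<subseteq> X_verts V E \<and> {f \<in> cub_aut V E. \<forall>x\<in>F. f x = x} \<subseteq> U"
  using assms
proof (induction rule: generate_topology_on.induct)
  case Empty then show ?case by simp
next
  case (Int a b)
  have ia: "id \<in> a" and ib: "id \<in> b" using Int.prems by (blast, blast)
  obtain F1 where F1: "finite F1" "F1 \<subseteq> X_verts V E" "{f \<in> cub_aut V E. \<forall>x\<in>F1. f x = x} \<subseteq> a"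
    using Int.IH(1)[OF ia] by (elim exE conjE) simp
  obtain F2 where F2: "finite F2" "F2 \<subseteq> X_verts V E" "{f \<in> cub_aut V E. \<forall>x\<in>F2. f x = x} \<subseteq> b"
    using Int.IH(2)[OF ib] by (elim exE conjE) simp
  have sub: "{f \<in> cub_aut V E. \<forall>x\<in>F1 \<union> F2. f x = x} \<subseteq> a \<inter> b"
  proof
    fix f assume "f \<in> {f \<in> cub_aut V E. \<forall>x\<in>F1 \<union> F2. f x = x}"
    then have "f \<in> {f \<in> cub_aut V E. \<forall>x\<in>F1. f x = x}" "f \<in> {f \<in> cub_aut V E. \<forall>x\<in>F2. f x = x}"
      by simp_all
    then show "f \<in> a \<inter> b" using F1(3) F2(3) by (meson IntI subsetD)
  qed
  have "finite (F1 \<union> F2)" "F1 \<union> F2 \<subseteq> X_verts V E" using F1 F2 by simp_all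
  then show ?case using sub by (intro exI[of _ "F1 \<union> F2"] conjI)
next
  case (UN K)
  obtain k where k: "k \<in> K" "id \<in> k" using UN.prems by (elim UnionE)
  obtain F where F: "finite F" "F \<subseteq> X_verts V E" "{f \<in> cub_aut V E. \<forall>x\<in>F. f x = x} \<subseteq> k"
    using UN.IH[OF k] by (elim exE conjE) simp
  have "k \<subseteq> \<Union>K" using k(1) by (rule Union_upper)
  then show ?case using F by (intro exI[of _ F] conjI) (auto dest: subsetD)
next
  case (Basis s)
  obtain F \<phi> where s: "s = {f \<in> cub_aut V E. \<forall>x\<in>F. f x = \<phi> x}" "finite F" "F \<subseteq> X_verts V E"
    using Basis.hyps by blast
  have "\<forall>x\<in>F. x = \<phi> x" using Basis.prems s(1) by simp
  then have "{f \<in> cub_aut V E. \<forall>x\<in>F. f x = x} \<subseteq> s" using s(1) by auto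
  then show ?case using s(2,3) by (intro exI[of _ F] conjI)
qed

lemma nondisc:
  assumes "id \<in> S"
    and "\<forall>F. finite F \<and> F \<subseteq> X_verts V E \<longrightarrow> (\<exists>f\<in>S. f \<in> cub_aut V E \<and> f \<noteq> id \<and> (\<forall>x\<in>F. f x = x))"
  shows "\<not> discrete_in (aut_topology V E) S"
proof
  assume d: "discrete_in (aut_topology V E) S"
  have "{id} \<subseteq> S" using assms(1) by (rule insert_subsetI) (rule empty_subsetI)
  then have "openin (discrete_topology S) {id}" by (simp only: openin_discrete_topology)
  then have "openin (subtopology (aut_topology V E) S) {id}" using d by (simp only: discrete_in_def)
  then obtain U where U: "openin (aut_topology V E) U" "{id} = U \<inter> S"
    unfolding openin_subtopology by (elim exE conjE)
  have gen: "generate_topology_on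
     {{f \<in> cub_aut V E. \<forall>x\<in>F. f x = \<phi> x} | F \<phi>. finite F \<and> F \<subseteq> X_verts V E \<and> \<phi> \<in> cub_aut V E} U"
    using U(1) unfolding aut_topology_def openin_topology_generated_by_iff .
  have idU: "id \<in> U" using U(2) by blast
  obtain F where F: "finite F" "F \<subseteq> X_verts V E" "{f \<in> cub_aut V E. \<forall>x\<in>F. f x = x} \<subseteq> U"
    using open_id[OF gen idU] by (elim exE conjE) simp
  obtain f where f: "f \<in> S" "f \<in> cub_aut V E" "f \<noteq> id" "\<forall>x\<in>F. f x = x"
    using assms(2) F(1,2) by meson
  have "f \<in> {f \<in> cub_aut V E. \<forall>x\<in>F. f x = x}" using f(2,4) by simp
  then have "f \<in> U \<inter> S" using F(3) f(1) by (meson IntI subsetD)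
  then have "f \<in> {id}" using U(2) by simp
  then show False using f(3) by simp
qed

section \<open>The swap of copies 2 and 3\<close>

definition sw :: "nat \<Rightarrow> nat" where "sw i = (if i = 2 then 3 else if i = 3 then 2 else i)"
definition swp :: "nat \<times> 'a \<Rightarrow> nat \<times> 'a" where "swp p = (sw (fst p), snd p)"

lemma sw_simps[simp]: "sw (sw i) = i" "sw i = 1 \<longleftrightarrow> i = 1" "sw 0 = 0" "sw 1 = 1"
  "sw i = Suc 0 \<longleftrightarrow> i = Suc 0"
  "sw i < 4 \<longleftrightarrow> i < 4"
  by (auto simp: sw_def)

lemma swp_wedge: "swp (wedge_vert v i x) = wedge_vert v (sw i) x"
  by (simp add: wedge_vert_def swp_def)

lemma twist_inst: "twist (wedge4_V VG v) (wedge4_E EG v) swp (\<lambda>s. fst s = 1)"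
proof
  fix s assume "s \<in> wedge4_V VG v"
  then obtain i x where "i < 4" "x \<in> VG" "s = wedge_vert v i x" by (auto simp: wedge4_V_def)
  then have "swp s = wedge_vert v (sw i) x" "sw i < 4" by (simp_all add: swp_wedge)
  then show "swp s \<in> wedge4_V VG v" unfolding wedge4_V_def using \<open>x \<in> VG\<close> by blast
next
  fix s :: "nat \<times> 'a" show "swp (swp s) = s" by (simp add: swp_def)
next
  fix s :: "nat \<times> 'a" show "(fst (swp s) = 1) = (fst s = 1)" by (simp add: swp_def)
next
  fix s :: "nat \<times> 'a" assume "fst s = 1" then show "swp s = s" by (cases s) (simp add: swp_def sw_def)
next
  fix s t assume E: "wedge4_E EG v s t" and P: "fst s = 1"
  then obtain i x y where ixy: "i < 4" "EG x y" "s = wedge_vert v i x" "t = wedge_vert v i y"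
    by (auto simp: wedge4_E_def)
  then have "i = 1" using P by (auto simp: wedge_vert_def split: if_splits)
  then show "swp t = t" using ixy by (simp add: wedge_vert_def swp_def sw_def)
next
  fix s t assume E: "wedge4_E EG v s t" and P: "fst t = 1"
  then obtain i x y where ixy: "i < 4" "EG x y" "s = wedge_vert v i x" "t = wedge_vert v i y"
    by (auto simp: wedge4_E_def)
  then have "i = 1" using P by (auto simp: wedge_vert_def split: if_splits)
  then show "swp s = s" using ixy by (simp add: wedge_vert_def swp_def sw_def)
next
  fix s t assume E: "wedge4_E EG v s t"
  then obtain i x y where ixy: "i < 4" "EG x y" "s = wedge_vert v i x" "t = wedge_vert v i y"
    by (auto simp: wedge4_E_def)
  then have "swp s = wedge_vert v (sw i) x" "swp t = wedge_vert v (sw i) y" "sw i < 4"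
    by (simp_all add: swp_wedge)
  then show "wedge4_E EG v (swp s) (swp t)" unfolding wedge4_E_def using ixy(2) by blast
qed

lemma exp_sum_append: "exp_sum (a @ b) = exp_sum a + exp_sum b"
  by (simp add: exp_sum_cnt)

lemma exp_sum_winv: "exp_sum (winv a) = - exp_sum a"
  by (simp add: exp_sum_cnt)

context twist
begin

lemma fm_id: "(\<forall>q. q mod N \<noteq> q0) \<Longrightarrow> f = id"
proof
  fix x assume h: "\<forall>q. q mod N \<noteq> q0"
  show "f x = id x"
  proof (cases "x \<in> X_verts V E")
    case True
    then obtain a where a: "a \<in> raag_words V" "x = cls a" by (auto simp: X_verts_iff)
    have "g 0 a = a" by (rule gm_id_cond) (simp add: h)
    then show ?thesis using a by (simp add: fm_cls)
  next
    case False then show ?thesis by (simp add: fm_out)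
  qed
qed

lemma fm_in_S:
  assumes "N > 0"
  shows "f \<in> commensurator V E (BB_sub V E) \<inter> commensurator V E (RAAG_sub V E)"
proof -
  have 1: "f \<in> commensurator V E (RAAG_sub V E)" unfolding RAAG_sub_def
    by (rule fm_comm[OF assms]) (auto simp: gm_words)
  have 2: "f \<in> commensurator V E (BB_sub V E)" unfolding BB_sub_def
    by (rule fm_comm[OF assms]) (auto simp: gm_words exp_sum_append exp_sum_winv)
  show ?thesis using 1 2 by blast
qed

end

lemma arith_aux:
  fixes M k :: int
  assumes "0 \<le> M" "\<bar>k\<bar> \<le> M"
  shows "k mod (2 * M + 3) \<noteq> M + 1"
proof (cases "k \<ge> 0")
  case True
  then have "k mod (2 * M + 3) = k" using assms by simp
  then show ?thesis using assms by simp
next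
  case False
  have "(k + (2 * M + 3)) mod (2 * M + 3) = k + (2 * M + 3)"
    using assms False by (intro mod_pos_pos_trivial) auto
  then have "k mod (2 * M + 3) = k + (2 * M + 3)" by simp
  then show ?thesis using assms False by simp
qed

lemma cnt_replicate: "cnt Q (replicate n l) = int n * ltr Q l"
  by (induction n) (auto simp: algebra_simps)



lemma wedge_in_V: "i < 4 \<Longrightarrow> x \<in> VG \<Longrightarrow> x \<noteq> v \<Longrightarrow> (i, x) \<in> wedge4_V VG v"
proof -
  assume h: "i < 4" "x \<in> VG" "x \<noteq> v"
  have "wedge_vert v i x = (i, x)" using h(3) by (simp add: wedge_vert_def)
  then show ?thesis unfolding wedge4_V_def using h(1,2) by (metis (mono_tags, lifting) mem_Collect_eq)
qed

lemma main_fix: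
  fixes VG :: "'a set" and EG :: "'a \<Rightarrow> 'a \<Rightarrow> bool" and v w :: 'a
  assumes "v \<in> VG" and "w \<in> VG" and "w \<noteq> v"
  defines "VL \<equiv> wedge4_V VG v" and "EL \<equiv> wedge4_E EG v"
  defines "S \<equiv> commensurator VL EL (BB_sub VL EL) \<inter> commensurator VL EL (RAAG_sub VL EL)"
  shows "id \<in> S \<and> (\<forall>F. finite F \<and> F \<subseteq> X_verts VL EL \<longrightarrow>
     (\<exists>f\<in>S. f \<in> cub_aut VL EL \<and> f \<noteq> id \<and> (\<forall>x\<in>F. f x = x)))"
proof -
  define P where "P = (\<lambda>s :: nat \<times> 'a. fst s = 1)"
  have tw: "twist VL EL swp P" unfolding VL_def EL_def P_def by (rule twist_inst)
  have idS: "id \<in> S"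
  proof -
    have "fm VL EL swp P 1 (-1) = id"
      by (rule twist.fm_id[OF tw]) simp
    moreover have "fm VL EL swp P 1 (-1) \<in> S"
      unfolding S_def by (rule twist.fm_in_S[OF tw]) simp
    ultimately show ?thesis by simp
  qed
  have main: "\<exists>f\<in>S. f \<in> cub_aut VL EL \<and> f \<noteq> id \<and> (\<forall>x\<in>F. f x = x)"
    if F: "finite F" "F \<subseteq> X_verts VL EL" for F
  proof -
    have "\<forall>x\<in>F. \<exists>u. u \<in> raag_words VL \<and> x = raag_class VL EL u"
    proof
      fix x assume "x \<in> F"
      then have "x \<in> X_verts VL EL" using F(2) by blast
      then show "\<exists>u. u \<in> raag_words VL \<and> x = raag_class VL EL u" unfolding X_verts_iff by blast
    qed
    then obtain rep where rep: "\<forall>x\<in>F. rep x \<in> raag_words VL \<and> x = raag_class VL EL (rep x)"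
      by metis
    define M where "M = (\<Sum>x\<in>F. length (rep x))"
    define N :: int where "N = 2 * int M + 3"
    define q0 :: int where "q0 = int M + 1"
    let ?f = "fm VL EL swp P N q0"
    let ?g = "gm swp P N q0"
    have fS: "?f \<in> S" unfolding S_def by (rule twist.fm_in_S[OF tw]) (simp add: N_def)
    have fC: "?f \<in> cub_aut VL EL" by (rule twist.fm_cub_aut[OF tw])
    have fxF: "\<forall>x\<in>F. ?f x = x"
    proof
      fix x assume x: "x \<in> F"
      have len: "length (rep x) \<le> M" unfolding M_def
        by (rule member_le_sum[OF x _ F(1)]) simp
      have "?g 0 (rep x) = rep x"
      proof (rule twist.gm_id_cond[OF tw], intro allI impI)
        fix k :: int assume "\<bar>k\<bar> \<le> int (length (rep x))"
        then have "\<bar>k\<bar> \<le> int M" using len by linarith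
        then show "(0 + k) mod N \<noteq> q0" unfolding N_def q0_def using arith_aux[of "int M" k] by simp
      qed
      then show "?f x = x" using rep x twist.fm_cls[OF tw, of "rep x" N q0] by simp
    qed
    have w1: "(1, w) \<in> VL" "(2, w) \<in> VL" "(3, w) \<in> VL"
      unfolding VL_def using wedge_in_V[of _ w VG v] assms(2,3) by simp_all
    define r where "r = replicate (Suc M) ((1 :: nat, w), True)"
    define z where "z = r @ [((2, w), True)]"
    define z' where "z' = r @ [((3, w), True)]"
    have rW: "r \<in> raag_words VL" using w1 unfolding r_def raag_words_def by auto
    have zW: "z \<in> raag_words VL" "z' \<in> raag_words VL" using rW w1 unfolding z_def z'_def by auto
    have gr: "?g 0 r = r" unfolding r_def
      by (rule twist.gm_fix[OF tw]) (simp add: swp_def sw_def)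
    have cr: "cnt P r = int (Suc M)" unfolding r_def by (simp add: cnt_replicate ltr_def P_def)
    have md: "int (Suc M) mod N = q0" unfolding N_def q0_def by simp
    have gz: "?g 0 z = z'"
      unfolding z_def z'_def
      using twist.gm_append[OF tw, of N q0 0 r "[((2, w), True)]"] gr cr md
      by (simp add: tw_def swp_def sw_def)
    have fz: "?f (raag_class VL EL z) = raag_class VL EL z'"
      using twist.fm_cls[OF tw, of z N q0] zW gz by simp
    have neq: "raag_class VL EL z' \<noteq> raag_class VL EL z"
    proof
      assume "raag_class VL EL z' = raag_class VL EL z"
      then have "raag_eq VL EL z' z" using cls_eq_iff zW by metis
      then have "cnt (\<lambda>s. s = (2, w)) z' = cnt (\<lambda>s. s = (2, w)) z" by (rule cnt_raag_eq)
      then show False unfolding z_def z'_def r_def by (simp add: cnt_replicate ltr_def)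
    qed
    have "?f \<noteq> id" using fz neq by auto
    then show ?thesis using fS fC fxF by blast
  qed
  show ?thesis using idS main by blast
qed

theorem corollary4p7:
  fixes VG :: "'a set" and EG :: "'a \<Rightarrow> 'a \<Rightarrow> bool" and v w :: 'a
  assumes "simplicial_graph VG EG"
    and "v \<in> VG" and "w \<in> VG" and "w \<noteq> v"
  defines "VL \<equiv> wedge4_V VG v" and "EL \<equiv> wedge4_E EG v"
  shows "\<not> discrete_in (aut_topology VL EL)
            (commensurator VL EL (BB_sub VL EL) \<inter> commensurator VL EL (RAAG_sub VL EL))
       \<and> \<not> discrete_in (aut_topology VL EL) (commensurator VL EL (BB_sub VL EL))"
proof -
  have m: "id \<in> commensurator VL EL (BB_sub VL EL) \<inter> commensurator VL EL (RAAG_sub VL EL) \<and>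
     (\<forall>F. finite F \<and> F \<subseteq> X_verts VL EL \<longrightarrow>
     (\<exists>f\<in>commensurator VL EL (BB_sub VL EL) \<inter> commensurator VL EL (RAAG_sub VL EL).
        f \<in> cub_aut VL EL \<and> f \<noteq> id \<and> (\<forall>x\<in>F. f x = x)))"
    unfolding VL_def EL_def by (rule main_fix[OF assms(2,3,4)])
  have 1: "\<not> discrete_in (aut_topology VL EL)
            (commensurator VL EL (BB_sub VL EL) \<inter> commensurator VL EL (RAAG_sub VL EL))"
    using nondisc[OF conjunct1[OF m] conjunct2[OF m]] .
  have 2: "\<not> discrete_in (aut_topology VL EL) (commensurator VL EL (BB_sub VL EL))"
  proof (rule nondisc)
    show "id \<in> commensurator VL EL (BB_sub VL EL)" using m by blast
    show "\<forall>F. finite F \<and> F \<subseteq> X_verts VL EL \<longrightarrow>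
      (\<exists>f\<in>commensurator VL EL (BB_sub VL EL). f \<in> cub_aut VL EL \<and> f \<noteq> id \<and> (\<forall>x\<in>F. f x = x))"
      using m by (meson IntD1)
  qed
  show ?thesis using 1 2 by (rule conjI)
qed


end
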